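(* Suppose Assumption A holds and $\rho>0$. Then for every $y\in\mathbb{R}^m$ (with $X(y)\neq\emptyset$), the vectors $Ex$ and $A_kx_k$, $k=1,\dots,K$, are constant as $x$ ranges over $X(y)$. Moreover, the dual function $d$ is differentiable everywhere and $$\nabla d(y)=q-Ex(y),$$ where $x(y)\in X(y)$ is any minimizer of $L(\cdot\,;y)$.
   Context: Let $K\ge1$ and let $x=(x_1^T,\dots,x_K^T)^T\in\mathbb{R}^n$ be partitioned into blocks $x_k$; let $E=(E_1,\dots,E_K)\in\mathbb{R}^{m\times n}$ be partitioned accordingly, $q\in\mathbb{R}^m$, and $X=\prod_{k=1}^K X_k$. Consider the problem (P): minimize $f(x)=\sum_{k=1}^K f_k(x_k)$ subject to $Ex=\sum_k E_kx_k=q$, $x_k\in X_k$. Assumption A: (a) the optimal value of (P) and the optimal value of its (Lagrangian) dual are attained, and $X\cap\mathrm{int}(\mathrm{dom}\, f)\cap\{x: Ex=q\}\ne\emptyset$; (b) $f_k(x_k)=g_k(A_kx_k)+h_k(x_k)$ with $g_k,h_k$ convex and continuous on their domains and $A_k$ given matrices (not necessarily of full column rank, possibly zero); (c) each $g_k$ is strictly convex and continuously differentiable on the interior of its domain, and there is $L>0$ with $\|A_k^T\nabla g_k(A_kx_k)-A_k^T\nabla g_k(A_kx_k')\|\le L\|x_k-x_k'\|$ for all $x_k,x_k'\in X_k$; (d) each $h_k$ either has polyhedral epigraph, or equals $\lambda_k\|x_k\|_1+\sum_J w_J\|x_{k,J}\|_2$ for some partition $(x_{k,J})_J$ of $x_k$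 and nonnegative constants $\lambda_k,w_J$, or is a sum of two such functions; (e) for any finite $y$ and $\xi$, $\sum_k h_k(x_k)$ is finite for all $x\in\{x: L(x;y)\le\xi\}\cap X$; (f) each $E_k$ has full column rank; (g) each $X_k$ is a compact polyhedral set. The constraint $x_k\in X_k$ is absorbed into $h_k$ by adding the indicator function of $X_k$, so all minimizations over $x$ are implicitly over $X$. Write $g(Ax)=\sum_k g_k(A_kx_k)$ and $h(x)=\sum_k h_k(x_k)$. For a fixed $\rho>0$, the augmented Lagrangian is $L(x;y)=f(x)+\langle y,q-Ex\rangle+\frac{\rho}{2}\|q-Ex\|^2$, the dual function is $d(y)=\min_x L(x;y)$, and $X(y)$ denotes the set of minimizers of $L(\cdot\,;y)$. *)

theory Defs
  imports "HOL-Analysis.Analysis"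
begin

definition strict_convex_on :: "'a::real_vector set \<Rightarrow> ('a \<Rightarrow> real) \<Rightarrow> bool" where
  "strict_convex_on S f \<longleftrightarrow> convex S \<and>
     (\<forall>x\<in>S. \<forall>y\<in>S. \<forall>t::real. x \<noteq> y \<and> 0 < t \<and> t < 1 \<longrightarrow>
        f ((1 - t) *\<^sub>R x + t *\<^sub>R y) < (1 - t) * f x + t * f y)"

text \<open>Blocks: the coordinates of x :: real^'n are partitioned by blk :: 'n => 'k.
  The block x_k is identified with its zero-padded copy blockproj blk k x,
  an element of the block subspace blocksub blk k (isomorphic to R^{n_k}).\<close>
definition blockproj :: "('n \<Rightarrow> 'k) \<Rightarrow> 'k \<Rightarrow> real^'n \<Rightarrow> real^'n" where
  "blockproj blk k x = (\<chi> i. if blk i = k then x $ i else 0)"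

definition blocksub :: "('n \<Rightarrow> 'k) \<Rightarrow> 'k \<Rightarrow> (real^'n) set" where
  "blocksub blk k = {v. \<forall>i. blk i \<noteq> k \<longrightarrow> v $ i = 0}"

text \<open>h_k has polyhedral epigraph (h_k is finite exactly on its domain D).\<close>
definition polyhedral_epi :: "(real^'n) set \<Rightarrow> (real^'n \<Rightarrow> real) \<Rightarrow> bool" where
  "polyhedral_epi D h \<longleftrightarrow> polyhedron {(x, t). x \<in> D \<and> h x \<le> t}"

text \<open>h_k = lambda_k ||x_k||_1 + sum_J w_J ||x_{k,J}||_2 for a partition (x_{k,J})_J of x_k
  (the partition is given by the fibres of grp on block k), with domain the whole block.\<close>
definition l1_group_type :: "('n \<Rightarrow> 'k) \<Rightarrow> 'k \<Rightarrow> (real^'n) set \<Rightarrow> (real^'n \<Rightarrow> real) \<Rightarrow> bool" where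
  "l1_group_type blk k D h \<longleftrightarrow> D = blocksub blk k \<and>
     (\<exists>(lam::real) (grp::'n \<Rightarrow> nat) (w::nat \<Rightarrow> real). lam \<ge> 0 \<and> (\<forall>J. w J \<ge> 0) \<and>
        (\<forall>x\<in>D. h x = lam * (\<Sum>i\<in>{i. blk i = k}. \<bar>x $ i\<bar>)
            + (\<Sum>J\<in>grp ` {i. blk i = k}. w J * sqrt (\<Sum>i\<in>{i. blk i = k \<and> grp i = J}. (x $ i)\<^sup>2))))"

definition basic_h :: "('n \<Rightarrow> 'k) \<Rightarrow> 'k \<Rightarrow> (real^'n) set \<Rightarrow> (real^'n \<Rightarrow> real) \<Rightarrow> bool" where
  "basic_h blk k D h \<longleftrightarrow> D \<subseteq> blocksub blk k \<and> (polyhedral_epi D h \<or> l1_group_type blk k D h)"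

definition admissible_h :: "('n \<Rightarrow> 'k) \<Rightarrow> 'k \<Rightarrow> (real^'n) set \<Rightarrow> (real^'n \<Rightarrow> real) \<Rightarrow> bool" where
  "admissible_h blk k D h \<longleftrightarrow> basic_h blk k D h \<or>
     (\<exists>D1 h1 D2 h2. basic_h blk k D1 h1 \<and> basic_h blk k D2 h2 \<and> D = D1 \<inter> D2 \<and>
        (\<forall>x\<in>D. h x = h1 x + h2 x))"

definition objf :: "('n \<Rightarrow> 'k::finite) \<Rightarrow> ('k \<Rightarrow> real^'n^'p) \<Rightarrow> ('k \<Rightarrow> real^'p \<Rightarrow> real)
    \<Rightarrow> ('k \<Rightarrow> real^'n \<Rightarrow> real) \<Rightarrow> real^'n \<Rightarrow> real" where
  "objf blk A g h x = (\<Sum>k\<in>UNIV. g k (A k *v blockproj blk k x) + h k (blockproj blk k x))"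

definition domf :: "('n \<Rightarrow> 'k) \<Rightarrow> ('k \<Rightarrow> real^'n^'p) \<Rightarrow> ('k \<Rightarrow> (real^'p) set)
    \<Rightarrow> ('k \<Rightarrow> (real^'n) set) \<Rightarrow> (real^'n) set" where
  "domf blk A Dg Dh = {x. \<forall>k. A k *v blockproj blk k x \<in> Dg k \<and> blockproj blk k x \<in> Dh k}"

definition Xprod :: "('n \<Rightarrow> 'k) \<Rightarrow> ('k \<Rightarrow> (real^'n) set) \<Rightarrow> (real^'n) set" where
  "Xprod blk X = {x. \<forall>k. blockproj blk k x \<in> X k}"

definition auglag :: "(real^'n \<Rightarrow> real) \<Rightarrow> real^'n^'m \<Rightarrow> real^'m \<Rightarrow> real \<Rightarrow> real^'n \<Rightarrow> real^'m \<Rightarrow> real" where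
  "auglag f E q rho x y = f x + y \<bullet> (q - E *v x) + rho / 2 * (norm (q - E *v x))\<^sup>2"

end

theory Submission
  imports Defs
begin
lemma normid:
  fixes q u w :: "'a::real_inner"
  shows "(norm (q - ((1/2) *\<^sub>R u + (1/2) *\<^sub>R w)))\<^sup>2 =
     ((norm (q - u))\<^sup>2 + (norm (q - w))\<^sup>2)/2 - (norm (w - u))\<^sup>2 / 4"
  by (simp add: power2_norm_eq_inner inner_simps inner_commute algebra_simps field_simps)
lemma Emid: fixes E :: "real^'n^'m" shows
  "E *v ((1/2) *\<^sub>R x + (1/2) *\<^sub>R z) = (1/2) *\<^sub>R (E *v x) + (1/2) *\<^sub>R (E *v z)"
  using matrix_vector_mul_linear[of E] by (simp add: linear_add linear_scale)
lemma bpmid: "blockproj blk k ((1/2) *\<^sub>R x + (1/2) *\<^sub>R z) = (1/2) *\<^sub>R blockproj blk k x + (1/2) *\<^sub>R blockproj blk k z"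
  by (simp add: blockproj_def vec_eq_iff)

lemma Lmid:
  fixes f :: "real^'n \<Rightarrow> real" and E :: "real^'n^'m"
  shows "auglag f E q rho ((1/2) *\<^sub>R a + (1/2) *\<^sub>R b) y
     = (auglag f E q rho a y + auglag f E q rho b y)/2
       + (f ((1/2) *\<^sub>R a + (1/2) *\<^sub>R b) - (f a + f b)/2)
       - rho/8 * (norm (E *v b - E *v a))\<^sup>2"
  unfolding auglag_def Emid normid
  by (simp add: inner_simps algebra_simps field_simps)

lemma Lshift:
  fixes f :: "real^'n \<Rightarrow> real" and E :: "real^'n^'m"
  shows "auglag f E q rho x y' = auglag f E q rho x y + (y' - y) \<bullet> (q - E *v x)"
  unfolding auglag_def by (simp add: inner_simps algebra_simps)

lemma strong_min:
  fixes f :: "real^'n \<Rightarrow> real" and E :: "real^'n^'m"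
  assumes Fmid: "\<forall>a\<in>F. \<forall>b\<in>F. (1/2) *\<^sub>R a + (1/2) *\<^sub>R b \<in> F"
    and fmid: "\<forall>a\<in>F. \<forall>b\<in>F. f ((1/2) *\<^sub>R a + (1/2) *\<^sub>R b) \<le> (f a + f b)/2"
    and x: "x \<in> F" "\<forall>x'\<in>F. auglag f E q rho x y \<le> auglag f E q rho x' y" and z: "z \<in> F"
  shows "auglag f E q rho z y - auglag f E q rho x y \<ge> rho/4 * (norm (E *v z - E *v x))\<^sup>2"
proof -
  let ?m = "(1/2) *\<^sub>R x + (1/2) *\<^sub>R z"
  have "?m \<in> F" using Fmid x z by blast
  hence "auglag f E q rho x y \<le> auglag f E q rho ?m y" using x by blast
  moreover have "f ?m \<le> (f x + f z)/2" using fmid x z by blast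
  moreover have "rho/4 * (norm (E *v z - E *v x))\<^sup>2 = 2 * (rho/8 * (norm (E *v z - E *v x))\<^sup>2)" by simp
  moreover note Lmid[of f E q rho x z y]
  ultimately have "auglag f E q rho x y \<le> (auglag f E q rho x y + auglag f E q rho z y)/2 - rho/8 * (norm (E *v z - E *v x))\<^sup>2"
    by linarith
  then show ?thesis by (simp add: field_simps)
qed

lemma lip_min:
  fixes f :: "real^'n \<Rightarrow> real" and E :: "real^'n^'m"
  assumes Fmid: "\<forall>a\<in>F. \<forall>b\<in>F. (1/2) *\<^sub>R a + (1/2) *\<^sub>R b \<in> F"
    and fmid: "\<forall>a\<in>F. \<forall>b\<in>F. f ((1/2) *\<^sub>R a + (1/2) *\<^sub>R b) \<le> (f a + f b)/2"
    and rho: "rho > 0"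
    and x: "x \<in> F" "\<forall>x'\<in>F. auglag f E q rho x y \<le> auglag f E q rho x' y"
    and z: "z \<in> F" "\<forall>x'\<in>F. auglag f E q rho z y' \<le> auglag f E q rho x' y'"
  shows "norm (E *v z - E *v x) \<le> 2/rho * norm (y' - y)"
proof -
  define n where "n = norm (E *v z - E *v x)"
  have n': "norm (E *v x - E *v z) = n" unfolding n_def by (simp add: norm_minus_commute)
  have 1: "auglag f E q rho z y - auglag f E q rho x y \<ge> rho/4 * n\<^sup>2"
    using strong_min[OF Fmid fmid x z(1)] n_def by simp
  have 2: "auglag f E q rho x y' - auglag f E q rho z y' \<ge> rho/4 * n\<^sup>2"
    using strong_min[OF Fmid fmid z x(1)] n' by simp
  have s: "(auglag f E q rho z y - auglag f E q rho x y) + (auglag f E q rho x y' - auglag f E q rho z y')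
      = (y - y') \<bullet> (E *v x - E *v z)"
    using Lshift[of f E q rho z y y] Lshift[of f E q rho z y' y] Lshift[of f E q rho x y' y]
    by (simp add: inner_simps algebra_simps)
  have cs: "(y - y') \<bullet> (E *v x - E *v z) \<le> norm (y' - y) * n"
    using norm_cauchy_schwarz[of "y - y'" "E *v x - E *v z"] n'
    by (simp add: norm_minus_commute)
  have "rho/2 * n\<^sup>2 \<le> norm (y' - y) * n" using 1 2 s cs by linarith
  hence "rho/2 * n * n \<le> norm (y' - y) * n" by (simp add: power2_eq_square)
  show ?thesis
  proof (cases "n = 0")
    case True then show ?thesis using rho unfolding n_def by simp
  next
    case False
    hence "n > 0" unfolding n_def by simp
    with \<open>rho/2 * n * n \<le> norm (y' - y) * n\<close> have "rho/2 * n \<le> norm (y' - y)" by simp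
    then show ?thesis using rho unfolding n_def by (simp add: field_simps)
  qed
qed

lemma deriv_min:
  fixes f :: "real^'n \<Rightarrow> real" and E :: "real^'n^'m"
  assumes Fmid: "\<forall>a\<in>F. \<forall>b\<in>F. (1/2) *\<^sub>R a + (1/2) *\<^sub>R b \<in> F"
    and fmid: "\<forall>a\<in>F. \<forall>b\<in>F. f ((1/2) *\<^sub>R a + (1/2) *\<^sub>R b) \<le> (f a + f b)/2"
    and rho: "rho > 0"
    and ne: "\<forall>y. \<exists>x\<in>F. \<forall>x'\<in>F. auglag f E q rho x y \<le> auglag f E q rho x' y"
    and x: "x \<in> F" "\<forall>x'\<in>F. auglag f E q rho x y \<le> auglag f E q rho x' y"
  shows "((\<lambda>y. Inf ((\<lambda>x. auglag f E q rho x y) ` F)) has_derivative (\<lambda>v. (q - E *v x) \<bullet> v)) (at y)"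
proof -
  define d where "d = (\<lambda>y. Inf ((\<lambda>x. auglag f E q rho x y) ` F))"
  have dval: "d y' = auglag f E q rho z y'"
    if "z \<in> F" "\<forall>x'\<in>F. auglag f E q rho z y' \<le> auglag f E q rho x' y'" for z y'
    unfolding d_def using that by (intro cInf_eq_minimum) auto
  have bound: "\<bar>d y' - d y - (q - E *v x) \<bullet> (y' - y)\<bar> \<le> 2/rho * (norm (y' - y))\<^sup>2" for y'
  proof -
    obtain z where z: "z \<in> F" "\<forall>x'\<in>F. auglag f E q rho z y' \<le> auglag f E q rho x' y'"
      using ne by blast
    have dy': "d y' = auglag f E q rho z y'" using dval[OF z] .
    have dy: "d y = auglag f E q rho x y" using dval[OF x] .
    have up: "auglag f E q rho z y' \<le> auglag f E q rho x y'" using z x(1) by blast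
    have lo: "auglag f E q rho x y \<le> auglag f E q rho z y" using x z(1) by blast
    have s1: "auglag f E q rho x y' = auglag f E q rho x y + (y' - y) \<bullet> (q - E *v x)"
      by (rule Lshift)
    have s2: "auglag f E q rho z y = auglag f E q rho z y' + (y - y') \<bullet> (q - E *v z)"
      by (rule Lshift)
    have lip: "norm (E *v z - E *v x) \<le> 2/rho * norm (y' - y)"
      by (rule lip_min[OF Fmid fmid rho x z])
    have cs: "\<bar>(y' - y) \<bullet> (E *v x - E *v z)\<bar> \<le> norm (y' - y) * norm (E *v z - E *v x)"
      using Cauchy_Schwarz_ineq2[of "y' - y" "E *v x - E *v z"] by (simp add: norm_minus_commute)
    have cs2: "norm (y' - y) * norm (E *v z - E *v x) \<le> norm (y' - y) * (2/rho * norm (y' - y))"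
      by (rule mult_left_mono[OF lip]) simp
    have e: "(y - y') \<bullet> (q - E *v z) = - ((y' - y) \<bullet> (q - E *v x)) - (y' - y) \<bullet> (E *v x - E *v z)"
      by (simp add: inner_simps algebra_simps)
    have e2: "(q - E *v x) \<bullet> (y' - y) = (y' - y) \<bullet> (q - E *v x)" by (simp add: inner_commute)
    have "norm (y' - y) * (2/rho * norm (y' - y)) = 2/rho * (norm (y' - y))\<^sup>2"
      by (simp add: power2_eq_square)
    then show ?thesis unfolding abs_le_iff using dy dy' up lo s1 s2 cs cs2 e e2 by linarith
  qed
  have "(d has_derivative (\<lambda>v. (q - E *v x) \<bullet> v)) (at y)"
    unfolding has_derivative_at'
  proof (intro conjI allI impI)
    show "bounded_linear (\<lambda>v. (q - E *v x) \<bullet> v)" by (rule bounded_linear_inner_right)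
    fix e :: real assume e: "e > 0"
    show "\<exists>\<delta>>0. \<forall>y'. 0 < norm (y' - y) \<and> norm (y' - y) < \<delta> \<longrightarrow>
        norm (d y' - d y - (q - E *v x) \<bullet> (y' - y)) / norm (y' - y) < e"
    proof (intro exI[of _ "e * rho / 2"] conjI allI impI)
      show "e * rho / 2 > 0" using e rho by simp
      fix y' assume h: "0 < norm (y' - y) \<and> norm (y' - y) < e * rho / 2"
      have "norm (d y' - d y - (q - E *v x) \<bullet> (y' - y)) / norm (y' - y) \<le> 2/rho * (norm (y' - y))\<^sup>2 / norm (y' - y)"
        using bound[of y'] h by (intro divide_right_mono) auto
      also have "\<dots> = 2/rho * norm (y' - y)" using h by (simp add: power2_eq_square)
      also have "\<dots> < 2/rho * (e * rho / 2)" using h rho by (intro mult_strict_left_mono) auto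
      also have "\<dots> = e" using rho by simp
      finally show "norm (d y' - d y - (q - E *v x) \<bullet> (y' - y)) / norm (y' - y) < e" .
    qed
  qed
  then show ?thesis unfolding d_def .
qed


lemma convex_mid: "convex S \<Longrightarrow> a \<in> S \<Longrightarrow> b \<in> S \<Longrightarrow> (1/2) *\<^sub>R a + (1/2) *\<^sub>R b \<in> S"
  by (rule convexD) auto

lemma convex_on_mid: "convex_on S g \<Longrightarrow> a \<in> S \<Longrightarrow> b \<in> S \<Longrightarrow>
    g ((1/2) *\<^sub>R a + (1/2) *\<^sub>R b) \<le> (g a + g b)/2"
  using convex_onD[of S g "1/2" a b] by simp

lemma strict_mid: "strict_convex_on S g \<Longrightarrow> a \<in> S \<Longrightarrow> b \<in> S \<Longrightarrow> a \<noteq> b \<Longrightarrow>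
    g ((1/2) *\<^sub>R a + (1/2) *\<^sub>R b) < (g a + g b)/2"
  unfolding strict_convex_on_def
  apply (elim conjE)
  apply (drule bspec[of _ _ a], assumption)
  apply (drule bspec[of _ _ b], assumption)
  apply (drule spec[of _ "1/2"])
  by simp

lemma Amid: fixes M :: "real^'n^'p" shows
  "M *v blockproj blk k ((1/2) *\<^sub>R x + (1/2) *\<^sub>R z) = (1/2) *\<^sub>R (M *v blockproj blk k x) + (1/2) *\<^sub>R (M *v blockproj blk k z)"
  by (simp add: bpmid Emid)

theorem lemma2p1:
  fixes blk :: "'n::finite \<Rightarrow> 'k::finite"
    and E :: "real^'n^'m::finite" and q :: "real^'m"
    and X :: "'k \<Rightarrow> (real^'n) set"
    and A :: "'k \<Rightarrow> real^'n^'p::finite"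
    and g :: "'k \<Rightarrow> real^'p \<Rightarrow> real" and Dg :: "'k \<Rightarrow> (real^'p) set"
    and gradg :: "'k \<Rightarrow> real^'p \<Rightarrow> real^'p"
    and h :: "'k \<Rightarrow> real^'n \<Rightarrow> real" and Dh :: "'k \<Rightarrow> (real^'n) set"
    and Lip rho :: real
  defines "f \<equiv> objf blk A g h"
    and "F \<equiv> Xprod blk X \<inter> domf blk A Dg Dh"
    and "Lag \<equiv> auglag (objf blk A g h) E q rho"
    and "d \<equiv> \<lambda>y. Inf ((\<lambda>x. auglag (objf blk A g h) E q rho x y) ` (Xprod blk X \<inter> domf blk A Dg Dh))"
    and "Xmin \<equiv> \<lambda>y. {x \<in> Xprod blk X \<inter> domf blk A Dg Dh. \<forall>x' \<in> Xprod blk X \<inter> domf blk A Dg Dh.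
                    auglag (objf blk A g h) E q rho x y \<le> auglag (objf blk A g h) E q rho x' y}"
    and "d0 \<equiv> \<lambda>y. (INF x\<in>Xprod blk X \<inter> domf blk A Dg Dh. ereal (objf blk A g h x + y \<bullet> (q - E *v x)))"
  assumes rho_pos: "rho > 0"
    (* A(a) *)
    and primal_attained: "\<exists>xs\<in>F. E *v xs = q \<and>
                              (\<forall>x\<in>F. E *v x = q \<longrightarrow> f xs \<le> f x)"
    and dual_attained: "\<exists>ys. d0 ys \<noteq> -\<infinity> \<and> (\<forall>y. d0 y \<le> d0 ys)"
    and slater: "Xprod blk X \<inter> interior (domf blk A Dg Dh) \<inter> {x. E *v x = q} \<noteq> {}"
    (* A(b) *)
    and g_cvx: "\<And>k. convex (Dg k) \<and> convex_on (Dg k) (g k) \<and> continuous_on (Dg k) (g k)"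
    and h_cvx: "\<And>k. convex (Dh k) \<and> convex_on (Dh k) (h k) \<and> continuous_on (Dh k) (h k)"
    (* A(c) *)
    and g_strict: "\<And>k. strict_convex_on (Dg k) (g k)"
    and g_grad: "\<And>k u. u \<in> interior (Dg k) \<Longrightarrow>
                    (g k has_derivative (\<lambda>v. gradg k u \<bullet> v)) (at u)"
    and g_C1: "\<And>k. continuous_on (interior (Dg k)) (gradg k)"
    and Lip_pos: "Lip > 0"
    and g_Lip: "\<And>k xk xk'. xk \<in> X k \<Longrightarrow> xk' \<in> X k \<Longrightarrow>
        norm (transpose (A k) *v gradg k (A k *v xk) - transpose (A k) *v gradg k (A k *v xk'))
          \<le> Lip * norm (xk - xk')"
    (* A(d) *)
    and h_type: "\<And>k. admissible_h blk k (Dh k) (h k)"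
    (* A(e) *)
    and h_finite: "\<And>y \<xi>. \<forall>x \<in> F. Lag x y \<le> \<xi> \<longrightarrow> (\<forall>k. blockproj blk k x \<in> Dh k)"
    (* A(f) *)
    and E_rank: "\<And>k v. v \<in> blocksub blk k \<Longrightarrow> E *v v = 0 \<Longrightarrow> v = 0"
    (* A(g) *)
    and X_poly: "\<And>k. X k \<subseteq> blocksub blk k \<and> compact (X k) \<and> polyhedron (X k)"
  shows "(\<forall>y. Xmin y \<noteq> {} \<longrightarrow>
            (\<forall>x\<in>Xmin y. \<forall>x'\<in>Xmin y. E *v x = E *v x' \<and>
               (\<forall>k. A k *v blockproj blk k x = A k *v blockproj blk k x')))
       \<and> ((\<forall>y. Xmin y \<noteq> {}) \<longrightarrow>
            (\<forall>y. d differentiable (at y) \<and>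
                 (\<forall>x\<in>Xmin y. (d has_derivative (\<lambda>v. (q - E *v x) \<bullet> v)) (at y))))"
proof -
  let ?L = "auglag (objf blk A g h) E q rho"
  have Xm: "Xmin = (\<lambda>y. {x \<in> F. \<forall>x'\<in>F. ?L x y \<le> ?L x' y})"
    unfolding Xmin_def F_def ..
  have dd: "d = (\<lambda>y. Inf ((\<lambda>x. ?L x y) ` F))" unfolding d_def F_def ..
  have Fmid: "\<forall>a\<in>F. \<forall>b\<in>F. (1/2) *\<^sub>R a + (1/2) *\<^sub>R b \<in> F"
  proof (intro ballI)
    fix a b assume a: "a \<in> F" and b: "b \<in> F"
    show "(1/2) *\<^sub>R a + (1/2) *\<^sub>R b \<in> F"
      using a b unfolding F_def Xprod_def domf_def
      using convex_mid[OF polyhedron_imp_convex[OF conjunct2[OF conjunct2[OF X_poly]]]]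
        convex_mid[OF conjunct1[OF g_cvx]] convex_mid[OF conjunct1[OF h_cvx]]
      by (auto simp: bpmid Amid Emid)
  qed
  have fmid: "\<forall>a\<in>F. \<forall>b\<in>F. objf blk A g h ((1/2) *\<^sub>R a + (1/2) *\<^sub>R b) \<le> (objf blk A g h a + objf blk A g h b)/2"
  proof (intro ballI)
    fix a b assume a: "a \<in> F" and b: "b \<in> F"
    have "objf blk A g h ((1/2) *\<^sub>R a + (1/2) *\<^sub>R b) \<le>
      (\<Sum>k\<in>UNIV. ((g k (A k *v blockproj blk k a) + h k (blockproj blk k a)) + (g k (A k *v blockproj blk k b) + h k (blockproj blk k b)))/2)"
      unfolding objf_def
    proof (rule sum_mono)
      fix k :: 'k
      have ga: "A k *v blockproj blk k a \<in> Dg k" "A k *v blockproj blk k b \<in> Dg k"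
        and ha: "blockproj blk k a \<in> Dh k" "blockproj blk k b \<in> Dh k"
        using a b unfolding F_def domf_def by auto
      show "g k (A k *v blockproj blk k ((1/2) *\<^sub>R a + (1/2) *\<^sub>R b)) + h k (blockproj blk k ((1/2) *\<^sub>R a + (1/2) *\<^sub>R b))
         \<le> ((g k (A k *v blockproj blk k a) + h k (blockproj blk k a)) + (g k (A k *v blockproj blk k b) + h k (blockproj blk k b)))/2"
        using convex_on_mid[OF conjunct1[OF conjunct2[OF g_cvx]] ga]
          convex_on_mid[OF conjunct1[OF conjunct2[OF h_cvx]] ha]
        unfolding Emid bpmid add_divide_distrib by linarith
    qed
    also have "\<dots> = (objf blk A g h a + objf blk A g h b)/2"
      unfolding objf_def sum_divide_distrib[symmetric] sum.distrib ..
    finally show "objf blk A g h ((1/2) *\<^sub>R a + (1/2) *\<^sub>R b) \<le> (objf blk A g h a + objf blk A g h b)/2" .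
  qed
  have part1: "E *v x = E *v x' \<and> (\<forall>k. A k *v blockproj blk k x = A k *v blockproj blk k x')"
    if x: "x \<in> Xmin y" and x': "x' \<in> Xmin y" for x x' y
  proof -
    have xF: "x \<in> F" "\<forall>z\<in>F. ?L x y \<le> ?L z y" using x unfolding Xm by auto
    have x'F: "x' \<in> F" "\<forall>z\<in>F. ?L x' y \<le> ?L z y" using x' unfolding Xm by auto
    have eq: "?L x y = ?L x' y" using xF x'F by (meson order_antisym)
    have "rho/4 * (norm (E *v x' - E *v x))\<^sup>2 \<le> 0"
      using strong_min[OF Fmid fmid xF x'F(1)] eq by simp
    hence "(norm (E *v x' - E *v x))\<^sup>2 \<le> 0" using rho_pos
      by (simp add: mult_le_0_iff)
    hence E1: "E *v x = E *v x'" by simp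
    have "A k *v blockproj blk k x = A k *v blockproj blk k x'" for k
    proof (rule ccontr)
      assume ne: "A k *v blockproj blk k x \<noteq> A k *v blockproj blk k x'"
      let ?m = "(1/2) *\<^sub>R x + (1/2) *\<^sub>R x'"
      have "objf blk A g h ?m <
        (\<Sum>k\<in>UNIV. ((g k (A k *v blockproj blk k x) + h k (blockproj blk k x)) + (g k (A k *v blockproj blk k x') + h k (blockproj blk k x')))/2)"
        unfolding objf_def
      proof (rule sum_strict_mono_ex1)
        show "finite (UNIV :: 'k set)" by simp
        show "\<forall>j\<in>UNIV. g j (A j *v blockproj blk j ?m) + h j (blockproj blk j ?m)
         \<le> ((g j (A j *v blockproj blk j x) + h j (blockproj blk j x)) + (g j (A j *v blockproj blk j x') + h j (blockproj blk j x')))/2"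
        proof
          fix j :: 'k assume "j \<in> UNIV"
          have ga: "A j *v blockproj blk j x \<in> Dg j" "A j *v blockproj blk j x' \<in> Dg j"
            and ha: "blockproj blk j x \<in> Dh j" "blockproj blk j x' \<in> Dh j"
            using xF x'F unfolding F_def domf_def by auto
          show "g j (A j *v blockproj blk j ?m) + h j (blockproj blk j ?m)
           \<le> ((g j (A j *v blockproj blk j x) + h j (blockproj blk j x)) + (g j (A j *v blockproj blk j x') + h j (blockproj blk j x')))/2"
            using convex_on_mid[OF conjunct1[OF conjunct2[OF g_cvx]] ga]
              convex_on_mid[OF conjunct1[OF conjunct2[OF h_cvx]] ha]
            unfolding Emid bpmid add_divide_distrib by linarith
        qed
        have ga: "A k *v blockproj blk k x \<in> Dg k" "A k *v blockproj blk k x' \<in> Dg k"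
          and ha: "blockproj blk k x \<in> Dh k" "blockproj blk k x' \<in> Dh k"
          using xF x'F unfolding F_def domf_def by auto
        have "g k (A k *v blockproj blk k ?m) + h k (blockproj blk k ?m)
           < ((g k (A k *v blockproj blk k x) + h k (blockproj blk k x)) + (g k (A k *v blockproj blk k x') + h k (blockproj blk k x')))/2"
          using strict_mid[OF g_strict ga ne]
            convex_on_mid[OF conjunct1[OF conjunct2[OF h_cvx]] ha]
          unfolding Emid bpmid add_divide_distrib by linarith
        then show "\<exists>j\<in>UNIV. g j (A j *v blockproj blk j ?m) + h j (blockproj blk j ?m)
         < ((g j (A j *v blockproj blk j x) + h j (blockproj blk j x)) + (g j (A j *v blockproj blk j x') + h j (blockproj blk j x')))/2"
          by blast
      qed
      also have "\<dots> = (objf blk A g h x + objf blk A g h x')/2"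
        unfolding objf_def sum_divide_distrib[symmetric] sum.distrib ..
      finally have lt: "objf blk A g h ?m < (objf blk A g h x + objf blk A g h x')/2" .
      have "?m \<in> F" using Fmid xF x'F by blast
      hence le: "?L x y \<le> ?L ?m y" using xF by blast
      have nn: "0 \<le> rho/8 * (norm (E *v x' - E *v x))\<^sup>2" using rho_pos by simp
      show False using Lmid[of "objf blk A g h" E q rho x x' y] lt le nn eq unfolding add_divide_distrib by linarith
    qed
    with E1 show ?thesis by blast
  qed
  have part2: "d differentiable (at y) \<and> (\<forall>x\<in>Xmin y. (d has_derivative (\<lambda>v. (q - E *v x) \<bullet> v)) (at y))"
    if ne: "\<forall>y. Xmin y \<noteq> {}" for y
  proof -
    have ne': "\<forall>y. \<exists>x\<in>F. \<forall>x'\<in>F. ?L x y \<le> ?L x' y" using ne unfolding Xm by blast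
    have D: "(d has_derivative (\<lambda>v. (q - E *v x) \<bullet> v)) (at y)" if "x \<in> Xmin y" for x
    proof -
      have xF: "x \<in> F" "\<forall>z\<in>F. ?L x y \<le> ?L z y" using that unfolding Xm by auto
      show ?thesis unfolding dd by (rule deriv_min[OF Fmid fmid rho_pos ne' xF])
    qed
    obtain x where "x \<in> Xmin y" using ne by blast
    then have "d differentiable (at y)" using D unfolding differentiable_def by blast
    with D show ?thesis by blast
  qed
  show ?thesis using part1 part2 by blast
qed

end
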